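(* Let $G$ be a bipartite graph with colour classes $V$ and $W$, where $\#V=v$ and $\#W=w$, and let $e$ be the number of edges of $G$. Suppose $G$ contains no cycle of length $4$ and no cycle of length $6$. Then: (i) $e^3-(v+w)e^2+2vwe-v^2w^2\le 0$; (ii) if moreover $v\ge\lfloor w^2/4\rfloor$, then $e\le v+\lfloor w^2/4\rfloor$. *)

theory Defs
  imports Main
begin

definition bipartite_graph :: "'a set \<Rightarrow> 'a set \<Rightarrow> 'a set set \<Rightarrow> bool" where
  "bipartite_graph V W E \<longleftrightarrow> finite V \<and> finite W \<and> V \<inter> W = {} \<and>
     (\<forall>e\<in>E. \<exists>x\<in>V. \<exists>y\<in>W. e = {x, y})"

definition has_cycle_of_length :: "'a set set \<Rightarrow> nat \<Rightarrow> bool" where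
  "has_cycle_of_length E k \<longleftrightarrow> 3 \<le> k \<and>
     (\<exists>c :: nat \<Rightarrow> 'a. inj_on c {0..<k} \<and> (\<forall>i<k. {c i, c ((i + 1) mod k)} \<in> E))"

end

theory Submission
  imports Defs "HOL-Analysis.Analysis"
begin

lemma tangent_at2:
  fixes t :: real assumes t: "t \<ge> 2"
  shows "t * ln (t - 1) \<ge> 2 * (t - 2)"
proof -
  let ?k = "\<lambda>t::real. t * ln (t - 1) - 2 * (t - 2)"
  have "?k 2 \<le> ?k t"
  proof (rule DERIV_nonneg_imp_nondecreasing[OF t])
    fix x :: real assume x: "2 \<le> x" "x \<le> t"
    have x1: "x - 1 > 0" using x by simp
    have d: "DERIV ?k x :> (ln (x - 1) + x / (x - 1) - 2)"
      using x1 by (auto intro!: derivative_eq_intros simp: divide_simps)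
    have l: "ln (1 / (x - 1)) \<le> 1 / (x - 1) - 1" using x by (intro ln_le_minus_one) auto
    have "ln (1 / (x - 1)) = - ln (x - 1)" using x by (simp add: ln_div)
    with l have l2: "ln (x - 1) \<ge> 1 - 1 / (x - 1)" by simp
    have "1 - 1 / (x - 1) + x / (x - 1) - 2 = 0" using x1 by (simp add: divide_simps)
    with l2 have "ln (x - 1) + x / (x - 1) - 2 \<ge> 0" by linarith
    with d show "\<exists>y. DERIV ?k x :> y \<and> y \<ge> 0" by blast
  qed
  then show ?thesis by simp
qed

lemma tangent_phi:
  fixes t a :: real assumes t: "t \<ge> 2" and a: "a \<ge> 2"
  shows "t * ln (t - 1) \<ge> a * ln (a - 1) + (ln (a - 1) + a / (a - 1)) * (t - a)"
proof (cases "a = 2")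
  case True
  then show ?thesis using tangent_at2[OF t] by simp
next
  case False
  with a have a2: "a > 2" by simp
  have cv: "convex_on {2..} (\<lambda>t::real. t * ln (t - 1))"
  proof (rule f''_ge0_imp_convex[where f' = "\<lambda>t. ln (t - 1) + t / (t - 1)"
        and f'' = "\<lambda>t. 1 / (t - 1) - 1 / (t - 1)^2"])
    show "convex {2::real..}" by simp
    fix x :: real assume x: "x \<in> {2..}"
    then have x1: "x - 1 > 0" by simp
    then show "DERIV (\<lambda>t. t * ln (t - 1)) x :> ln (x - 1) + x / (x - 1)"
      by (auto intro!: derivative_eq_intros simp: divide_simps)
    show "DERIV (\<lambda>t. ln (t - 1) + t / (t - 1)) x :> 1 / (x - 1) - 1 / (x - 1)^2"
    proof -
      have nz: "1 + x * x - x * 2 \<noteq> 0"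
      proof -
        have "1 + x * x - x * 2 = (x - 1) * (x - 1)" by (simp add: algebra_simps)
        then show ?thesis using x1 by simp
      qed
      show ?thesis using x1 nz by (auto intro!: derivative_eq_intros simp: field_simps power2_eq_square)
    qed
    have "1 / (x - 1) - 1 / (x - 1)^2 = (x - 2) / (x - 1)^2"
      using x1 by (simp add: divide_simps power2_eq_square)
    also have "\<dots> \<ge> 0" using x by simp
    finally show "1 / (x - 1) - 1 / (x - 1)^2 \<ge> 0" .
  qed
  have "t * ln (t - 1) - a * ln (a - 1) \<ge> (ln (a - 1) + a / (a - 1)) * (t - a)"
  proof (rule convex_on_imp_above_tangent[OF cv])
    show "connected {2::real..}" by simp
    show "a \<in> interior {2..}" using a2 by simp
    show "t \<in> {2..}" using t by simp
    show "((\<lambda>t. t * ln (t - 1)) has_field_derivative ln (a - 1) + a / (a - 1)) (at a within {2..})"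
      using a2 by (auto intro!: derivative_eq_intros simp: field_simps)
  qed
  then show ?thesis by simp
qed

lemma jensen_phi:
  fixes d :: "'a \<Rightarrow> real"
  assumes fin: "finite V" and ne: "V \<noteq> {}" and d2: "\<And>x. x \<in> V \<Longrightarrow> d x \<ge> 2"
  shows "(\<Sum>x\<in>V. d x * ln (d x - 1)) \<ge> (\<Sum>x\<in>V. d x) * ln ((\<Sum>x\<in>V. d x) / card V - 1)"
proof -
  define S where "S = (\<Sum>x\<in>V. d x)"
  define a where "a = S / card V"
  have cpos: "real (card V) > 0" using fin ne by (simp add: card_gt_0_iff)
  have "S \<ge> (\<Sum>x\<in>V. 2)" unfolding S_def by (rule sum_mono) (use d2 in auto)
  then have "S \<ge> 2 * card V" by simp
  then have a2: "a \<ge> 2" unfolding a_def using cpos by (simp add: field_simps)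
  define c where "c = ln (a - 1) + a / (a - 1)"
  have "(\<Sum>x\<in>V. d x * ln (d x - 1)) \<ge> (\<Sum>x\<in>V. a * ln (a - 1) + c * (d x - a))"
    by (rule sum_mono) (use tangent_phi d2 a2 in \<open>auto simp: c_def\<close>)
  also have "(\<Sum>x\<in>V. a * ln (a - 1) + c * (d x - a)) = card V * a * ln (a - 1) + c * (S - card V * a)"
    by (simp add: sum.distrib sum_subtractf sum_distrib_left[symmetric] S_def)
  also have "card V * a = S" unfolding a_def using cpos by simp
  finally show ?thesis unfolding S_def a_def by simp
qed

lemma amgm_edge:
  fixes \<alpha> \<beta> :: "'p \<Rightarrow> real"
  assumes "\<And>p. p \<in> P \<Longrightarrow> \<alpha> p > 0" "\<And>p. p \<in> P \<Longrightarrow> \<beta> p > 0" "A > 0" "B > 0"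
  shows "(\<Sum>p\<in>P. \<alpha> p * \<beta> p) \<ge> A * B * (\<Sum>p\<in>P. 1 + ln (\<alpha> p) - ln A + ln (\<beta> p) - ln B)"
proof -
  have "(\<Sum>p\<in>P. A * B * (1 + ln (\<alpha> p) - ln A + ln (\<beta> p) - ln B)) \<le> (\<Sum>p\<in>P. \<alpha> p * \<beta> p)"
  proof (rule sum_mono)
    fix p assume p: "p \<in> P"
    define z where "z = \<alpha> p * \<beta> p / (A * B)"
    have ap: "\<alpha> p > 0" and bp: "\<beta> p > 0" using assms p by auto
    have zp: "z > 0" using assms ap bp by (simp add: z_def)
    have "ln z \<le> z - 1" using zp by (rule ln_le_minus_one)
    moreover have "ln z = ln (\<alpha> p) + ln (\<beta> p) - ln A - ln B"
    proof -
      have "ln z = ln (\<alpha> p * \<beta> p) - ln (A * B)"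
        unfolding z_def using assms ap bp by (simp add: ln_div)
      also have "ln (\<alpha> p * \<beta> p) = ln (\<alpha> p) + ln (\<beta> p)" using ap bp by (simp add: ln_mult)
      also have "ln (A * B) = ln A + ln B" using assms by (simp add: ln_mult)
      finally show ?thesis by simp
    qed
    ultimately have "1 + ln (\<alpha> p) - ln A + ln (\<beta> p) - ln B \<le> z" by simp
    then have "A * B * (1 + ln (\<alpha> p) - ln A + ln (\<beta> p) - ln B) \<le> A * B * z"
      using assms by (intro mult_left_mono) auto
    also have "A * B * z = \<alpha> p * \<beta> p" using assms by (simp add: z_def)
    finally show "A * B * (1 + ln (\<alpha> p) - ln A + ln (\<beta> p) - ln B) \<le> \<alpha> p * \<beta> p" .
  qed
  then show ?thesis by (simp add: sum_distrib_left)
qed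

definition FF :: "int \<Rightarrow> int \<Rightarrow> int \<Rightarrow> int" where
  "FF v w e = v^2 * w^2 - 2 * v * w * e - e^3 + (v + w) * e^2"

lemma FF_sym: "FF v w e = FF w v e"
  unfolding FF_def by (simp add: algebra_simps)

lemma FF_alt: "FF v w e = v * w * (v * w - e) - e * (e - v) * (e - w)"
  unfolding FF_def by (simp add: algebra_simps power2_eq_square power3_eq_cube)

lemma FF_iso:
  assumes "FF (v - 1) w e \<ge> 0" "v \<ge> 1"
  shows "FF v w e \<ge> 0"
proof -
  have "FF v w e = FF (v - 1) w e + (e - w)^2 + 2 * (v - 1) * w^2"
    unfolding FF_def by (simp add: algebra_simps power2_eq_square power3_eq_cube)
  moreover have "2 * (v - 1) * w^2 \<ge> 0" using assms by simp
  ultimately show ?thesis using assms by simp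
qed

definition DD :: "int \<Rightarrow> int \<Rightarrow> int \<Rightarrow> int" where
  "DD v w e = (2 * v + 1) * w * (w - 1) - (2 * e + 1) * (e - v)"

lemma FF_step: "FF (v + 1) w (e + 1) = FF v w e + DD v w e"
  unfolding FF_def DD_def by (simp add: algebra_simps power2_eq_square power3_eq_cube)

lemma DD_nonneg:
  assumes F: "FF v w e \<ge> 0" and v: "v \<ge> 0" and w: "w \<ge> 1" and e: "e \<ge> 0" and evw: "e \<le> v * w"
  shows "DD v w e \<ge> 0"
proof (rule ccontr)
  assume neg: "\<not> DD v w e \<ge> 0"
  have c0: "w * (w - 1) \<ge> 0" using w by simp
  have A0: "(2 * v + 1) * w * (w - 1) \<ge> 0" using c0 v by (simp add: mult.assoc)
  show False
  proof (cases "e \<le> v")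
    case True
    then have "(2 * e + 1) * (e - v) \<le> 0" using e by (simp add: mult_nonneg_nonpos)
    then show False using neg A0 unfolding DD_def by simp
  next
    case ev: False
    have v1: "v \<ge> 1"
    proof (rule ccontr)
      assume "\<not> v \<ge> 1" then have "v = 0" using v by simp
      then show False using ev evw by simp
    qed
    show False
    proof (cases "e \<le> w")
      case True
      have "(2 * e + 1) * (e - v) \<le> (2 * w + 1) * (w - 1)"
        using True ev v1 by (intro mult_mono) auto
      also have "\<dots> \<le> ((2 * v + 1) * w) * (w - 1)"
      proof (rule mult_right_mono)
        have "(2 * v + 1) * w \<ge> 3 * w" using v1 w by (intro mult_right_mono) auto
        then show "2 * w + 1 \<le> (2 * v + 1) * w" using w by linarith
      qed (use w in simp)
      finally show False using neg unfolding DD_def by simp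
    next
      case ew: False
      define k where "k = e - v"
      define c where "c = w * (w - 1)"
      have kpos: "k > 0" using ev k_def by simp
      have ek: "e = v + k" using k_def by simp
      have kle: "k \<le> v * (w - 1)" using evw k_def by (simp add: algebra_simps)
      have Dneg: "(2 * e + 1) * k > (2 * v + 1) * c" using neg unfolding DD_def k_def c_def
        by (simp add: mult.assoc)
      have s1: "2 * e * k * (e - w) > ((2 * v + 1) * c - k) * (e - w)"
      proof -
        have "2 * e * k > (2 * v + 1) * c - k" using Dneg by (simp add: algebra_simps)
        then show ?thesis using ew by (intro mult_strict_right_mono) auto
      qed
      define M where "M = (2 * v + 1) * c + w + v * w"
      have Mpos: "M \<ge> 0" unfolding M_def c_def using v w c0 by simp
      have id2: "((2 * v + 1) * c - k) * (e - w) - 2 * v * w * (v * w - e)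
           = c * (v - 2 * v * w - w) + k * ((2 * v + 1) * c - v + w + 2 * v * w) - k^2"
        unfolding ek c_def by (simp add: algebra_simps power2_eq_square)
      have ksq: "k^2 \<le> k * (v * (w - 1))" using kle kpos by (simp add: power2_eq_square)
      have L: "((2 * v + 1) * c - k) * (e - w) - 2 * v * w * (v * w - e)
           \<ge> c * (v - 2 * v * w - w) + k * M"
      proof -
        have "k * ((2 * v + 1) * c - v + w + 2 * v * w) - k * (v * (w - 1)) = k * M"
          unfolding M_def by (simp add: algebra_simps)
        then show ?thesis using id2 ksq by linarith
      qed
      have kb: "(2 * v * w + 1) * k > (2 * v + 1) * c"
      proof -
        have "(2 * e + 1) * k \<le> (2 * v * w + 1) * k" using evw kpos by (intro mult_right_mono) auto
        then show ?thesis using Dneg by linarith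
      qed
      have Lk: "c * (v - 2 * v * w - w) + k * M \<ge> 0"
      proof -
        have p: "2 * v * w + 1 > 0" using v w by (simp add: add_pos_nonneg)
        have i1: "(2 * v * w + 1) * (c * (v - 2 * v * w - w) + k * M)
              = (2 * v * w + 1) * c * (v - 2 * v * w - w) + ((2 * v * w + 1) * k) * M"
          by (simp add: algebra_simps)
        have i2: "((2 * v * w + 1) * k) * M \<ge> ((2 * v + 1) * c) * M"
          using kb Mpos by (simp add: mult_right_mono)
        have i3: "(2 * v * w + 1) * c * (v - 2 * v * w - w) + ((2 * v + 1) * c) * M
              = c * (v * w * (2 * w - 3) + w * (w - 1) + v)"
          unfolding M_def c_def by (simp add: algebra_simps)
        have i4: "c * (v * w * (2 * w - 3) + w * (w - 1) + v) \<ge> 0"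
        proof (cases "w = 1")
          case True then show ?thesis by (simp add: c_def)
        next
          case False
          then have "w \<ge> 2" using w by simp
          then have "v * w * (2 * w - 3) \<ge> 0" using v by simp
          moreover have "w * (w - 1) \<ge> 0" using c0 .
          ultimately show ?thesis using c0 v unfolding c_def by simp
        qed
        have "(2 * v * w + 1) * (c * (v - 2 * v * w - w) + k * M) \<ge> 0"
          using i1 i2 i3 i4 by linarith
        then show ?thesis using p by (simp add: zero_le_mult_iff)
      qed
      have "2 * e * k * (e - w) > 2 * v * w * (v * w - e)" using s1 L Lk by linarith
      then have "e * k * (e - w) > v * w * (v * w - e)" by (simp add: mult.assoc)
      then have "FF v w e < 0" unfolding FF_alt k_def by simp
      then show False using F by simp
    qed
  qed
qed

lemma FF_leaf:
  assumes F: "FF (v - 1) w (e - 1) \<ge> 0" and v: "v \<ge> 1" and w: "w \<ge> 1" and e: "e \<ge> 1"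
    and evw: "e - 1 \<le> (v - 1) * w"
  shows "FF v w e \<ge> 0"
proof -
  have "DD (v - 1) w (e - 1) \<ge> 0" using DD_nonneg[OF F] v w e evw by simp
  with FF_step[of "v - 1" w "e - 1"] F show ?thesis by simp
qed

locale bip =
  fixes V W :: "'a set" and E :: "'a set set"
  assumes bg: "bipartite_graph V W E"
    and n4: "\<not> has_cycle_of_length E 4"
    and n6: "\<not> has_cycle_of_length E 6"
begin

lemma finV: "finite V" and finW: "finite W" and disj: "V \<inter> W = {}"
  and edge: "\<And>e. e \<in> E \<Longrightarrow> \<exists>x\<in>V. \<exists>y\<in>W. e = {x, y}"
  using bg unfolding bipartite_graph_def by auto

lemma noC4:
  assumes "x1 \<in> V" "x2 \<in> V" "y1 \<in> W" "y2 \<in> W" "x1 \<noteq> x2" "y1 \<noteq> y2"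
    "{x1,y1} \<in> E" "{x2,y1} \<in> E" "{x2,y2} \<in> E" "{x1,y2} \<in> E"
  shows False
proof -
  define c where "c = (\<lambda>i. [x1,y1,x2,y2] ! i)"
  have d: "x1 \<noteq> y1" "x1 \<noteq> y2" "x2 \<noteq> y1" "x2 \<noteq> y2" using assms disj by auto
  have i4: "{0..<4::nat} = {0,1,2,3}" by auto
  have "inj_on c {0..<4}" unfolding i4 c_def inj_on_def using d assms(5,6) by auto
  moreover have "\<forall>i<4. {c i, c ((i + 1) mod 4)} \<in> E"
  proof (intro allI impI)
    fix i :: nat assume "i < 4"
    then have "i = 0 \<or> i = 1 \<or> i = 2 \<or> i = 3" by auto
    then show "{c i, c ((i + 1) mod 4)} \<in> E" using assms unfolding c_def
      by (auto simp: insert_commute)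
  qed
  ultimately have "has_cycle_of_length E 4" unfolding has_cycle_of_length_def by auto
  then show False using n4 by simp
qed

lemma noC6:
  assumes "x1 \<in> V" "x2 \<in> V" "x3 \<in> V" "y1 \<in> W" "y2 \<in> W" "y3 \<in> W"
    "x1 \<noteq> x2" "x1 \<noteq> x3" "x2 \<noteq> x3" "y1 \<noteq> y2" "y1 \<noteq> y3" "y2 \<noteq> y3"
    "{x1,y1} \<in> E" "{x2,y1} \<in> E" "{x2,y2} \<in> E" "{x3,y2} \<in> E" "{x3,y3} \<in> E" "{x1,y3} \<in> E"
  shows False
proof -
  define c where "c = (\<lambda>i. [x1,y1,x2,y2,x3,y3] ! i)"
  have d: "x1 \<noteq> y1" "x1 \<noteq> y2" "x2 \<noteq> y1" "x2 \<noteq> y2" "x1 \<noteq> y3" "x2 \<noteq> y3"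
     "x3 \<noteq> y1" "x3 \<noteq> y2" "x3 \<noteq> y3" using assms disj by auto
  have i6: "{0..<6::nat} = {0,1,2,3,4,5}" by auto
  have "inj_on c {0..<6}" unfolding i6 c_def inj_on_def using d assms(7-12) by auto
  moreover have "\<forall>i<6. {c i, c ((i + 1) mod 6)} \<in> E"
  proof (intro allI impI)
    fix i :: nat assume "i < 6"
    then have "i = 0 \<or> i = 1 \<or> i = 2 \<or> i = 3 \<or> i = 4 \<or> i = 5" by auto
    then show "{c i, c ((i + 1) mod 6)} \<in> E" using assms unfolding c_def
      by (auto simp: insert_commute)
  qed
  ultimately have "has_cycle_of_length E 6" unfolding has_cycle_of_length_def by auto
  then show False using n6 by simp
qed


definition NV where "NV x = {y\<in>W. {x,y} \<in> E}"
definition NW where "NW y = {x\<in>V. {x,y} \<in> E}"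
definition Ed where "Ed = {(x,y). x \<in> V \<and> y \<in> W \<and> {x,y} \<in> E}"
definition deg where "deg u = card {e\<in>E. u \<in> e}"

lemma finE: "finite E"
proof -
  have "E \<subseteq> (\<lambda>(x,y). {x,y}) ` (V \<times> W)" using edge by fastforce
  then show ?thesis using finV finW by (meson finite_SigmaI finite_imageI finite_subset)
qed

lemma finNV: "finite (NV x)" unfolding NV_def using finW by simp
lemma finNW: "finite (NW y)" unfolding NW_def using finV by simp

lemma Ed_Sigma: "Ed = Sigma V NV" unfolding Ed_def NV_def by auto
lemma finEd: "finite Ed" unfolding Ed_Sigma using finV finNV by simp
lemma Ed_sub: "Ed \<subseteq> V \<times> W" unfolding Ed_def by auto

lemma pair_eq:
  assumes "x \<in> V" "x' \<in> V" "y \<in> W" "y' \<in> W" "{x,y} = {x',y'}"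
  shows "x = x' \<and> y = y'"
  using assms disj by (auto simp: doubleton_eq_iff)

lemma card_Ed: "card Ed = card E"
proof -
  have "bij_betw (\<lambda>(x,y). {x,y}) Ed E"
    unfolding bij_betw_def
  proof
    show "inj_on (\<lambda>(x,y). {x,y}) Ed"
    proof (rule inj_onI)
      fix p q assume p: "p \<in> Ed" and q: "q \<in> Ed" and h: "(\<lambda>(x,y). {x,y}) p = (\<lambda>(x,y). {x,y}) q"
      obtain a b where ab: "p = (a,b)" by force
      obtain c d where cd: "q = (c,d)" by force
      have "a \<in> V" "b \<in> W" using p ab unfolding Ed_def by auto
      moreover have "c \<in> V" "d \<in> W" using q cd unfolding Ed_def by auto
      moreover have "{a,b} = {c,d}" using h ab cd by simp
      ultimately have "a = c \<and> b = d" using pair_eq[of a c b d] by blast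
      then show "p = q" using ab cd by simp
    qed
    show "(\<lambda>(x,y). {x,y}) ` Ed = E"
    proof
      show "(\<lambda>(x,y). {x,y}) ` Ed \<subseteq> E" unfolding Ed_def by auto
      show "E \<subseteq> (\<lambda>(x,y). {x,y}) ` Ed"
      proof
        fix e assume "e \<in> E"
        then obtain x y where "x \<in> V" "y \<in> W" "e = {x,y}" using edge by blast
        then show "e \<in> (\<lambda>(x,y). {x,y}) ` Ed" using \<open>e \<in> E\<close> unfolding Ed_def by force
      qed
    qed
  qed
  then show ?thesis by (rule bij_betw_same_card)
qed

lemma card_E_le: "card E \<le> card V * card W"
proof -
  have "card Ed \<le> card (V \<times> W)" using Ed_sub finV finW by (intro card_mono) auto
  then show ?thesis using card_Ed by (simp add: card_cartesian_product)
qed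

lemma sum_NV: "(\<Sum>x\<in>V. card (NV x)) = card E"
  using card_Ed unfolding Ed_Sigma using finV finNV by (simp add: card_SigmaI)

lemma swap_Ed: "bij_betw (\<lambda>(x,y). (y,x)) Ed (Sigma W NW)"
  unfolding bij_betw_def inj_on_def Ed_def NW_def by (auto simp: image_iff)

lemma sum_NW: "(\<Sum>y\<in>W. card (NW y)) = card E"
proof -
  have "card (Sigma W NW) = card Ed" using swap_Ed by (simp add: bij_betw_same_card)
  then show ?thesis using card_Ed finW finNW by (simp add: card_SigmaI)
qed

lemma sum_Sigma_fst:
  assumes "finite A" "\<And>x. finite (B x)"
  shows "(\<Sum>p\<in>Sigma A B. f (fst p)) = (\<Sum>x\<in>A. real (card (B x)) * (f x :: real))"
proof -
  have "(\<Sum>p\<in>Sigma A B. f (fst p)) = (\<Sum>x\<in>A. \<Sum>y\<in>B x. f x)"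
    using assms by (subst sum.Sigma) (auto simp: case_prod_beta)
  then show ?thesis by simp
qed

lemma sum_Ed_fst: "(\<Sum>p\<in>Ed. f (fst p)) = (\<Sum>x\<in>V. real (card (NV x)) * f x)"
  unfolding Ed_Sigma using finV finNV by (rule sum_Sigma_fst)

lemma sum_Ed_snd: "(\<Sum>p\<in>Ed. f (snd p)) = (\<Sum>y\<in>W. real (card (NW y)) * f y)"
proof -
  have "(\<Sum>q\<in>Sigma W NW. f (fst q)) = (\<Sum>p\<in>Ed. f (fst ((\<lambda>(x,y). (y,x)) p)))"
    by (rule sum.reindex_bij_betw[OF swap_Ed, symmetric])
  then have "(\<Sum>p\<in>Ed. f (snd p)) = (\<Sum>q\<in>Sigma W NW. f (fst q))"
    by (simp add: case_prod_beta)
  also have "\<dots> = (\<Sum>y\<in>W. real (card (NW y)) * f y)"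
    using finW finNW by (rule sum_Sigma_fst)
  finally show ?thesis .
qed

lemma card_NV: assumes "x \<in> V" shows "card (NV x) = deg x"
proof -
  have "bij_betw (\<lambda>y. {x,y}) (NV x) {e\<in>E. x \<in> e}"
    unfolding bij_betw_def
  proof
    show "inj_on (\<lambda>y. {x,y}) (NV x)" unfolding inj_on_def NV_def using assms pair_eq by blast
    show "(\<lambda>y. {x,y}) ` NV x = {e\<in>E. x \<in> e}"
    proof
      show "(\<lambda>y. {x,y}) ` NV x \<subseteq> {e\<in>E. x \<in> e}" unfolding NV_def by auto
      show "{e\<in>E. x \<in> e} \<subseteq> (\<lambda>y. {x,y}) ` NV x"
      proof
        fix e assume e: "e \<in> {e\<in>E. x \<in> e}"
        then obtain x' y where "x' \<in> V" "y \<in> W" "e = {x',y}" using edge by blast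
        moreover have "x \<noteq> y" using assms \<open>y \<in> W\<close> disj by auto
        ultimately have "e = {x,y}" using e by auto
        then show "e \<in> (\<lambda>y. {x,y}) ` NV x" using e \<open>y \<in> W\<close> unfolding NV_def by auto
      qed
    qed
  qed
  then show ?thesis unfolding deg_def by (rule bij_betw_same_card)
qed

lemma card_NW: assumes "y \<in> W" shows "card (NW y) = deg y"
proof -
  have "bij_betw (\<lambda>x. {x,y}) (NW y) {e\<in>E. y \<in> e}"
    unfolding bij_betw_def
  proof
    show "inj_on (\<lambda>x. {x,y}) (NW y)" unfolding inj_on_def NW_def using assms pair_eq by blast
    show "(\<lambda>x. {x,y}) ` NW y = {e\<in>E. y \<in> e}"
    proof
      show "(\<lambda>x. {x,y}) ` NW y \<subseteq> {e\<in>E. y \<in> e}" unfolding NW_def by auto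
      show "{e\<in>E. y \<in> e} \<subseteq> (\<lambda>x. {x,y}) ` NW y"
      proof
        fix e assume e: "e \<in> {e\<in>E. y \<in> e}"
        then obtain x y' where "x \<in> V" "y' \<in> W" "e = {x,y'}" using edge by blast
        moreover have "x \<noteq> y" using assms \<open>x \<in> V\<close> disj by auto
        ultimately have "e = {x,y}" using e by auto
        then show "e \<in> (\<lambda>x. {x,y}) ` NW y" using e \<open>x \<in> V\<close> unfolding NW_def by auto
      qed
    qed
  qed
  then show ?thesis unfolding deg_def by (rule bij_betw_same_card)
qed


definition TT where "TT = Sigma Ed (\<lambda>p. (NW (snd p) - {fst p}) \<times> (NV (fst p) - {snd p}))"

lemma TT_bound: "card TT \<le> card V * card W - card E"
proof -
  let ?g = "\<lambda>(p::'a\<times>'a, q::'a\<times>'a). q"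
  have inj: "inj_on ?g TT"
  proof (rule inj_onI)
    fix a b assume a: "a \<in> TT" and b: "b \<in> TT" and h: "?g a = ?g b"
    obtain x1 y1 x z where a_eq: "a = ((x1,y1),(x,z))" by (metis prod.collapse)
    obtain x2 y2 x' z' where b_eq: "b = ((x2,y2),(x',z'))" by (metis prod.collapse)
    have xx: "x' = x" "z' = z" using h a_eq b_eq by auto
    have A: "x1 \<in> V" "y1 \<in> W" "{x1,y1} \<in> E" "x \<in> V" "{x,y1} \<in> E" "x \<noteq> x1" "z \<in> W" "{x1,z} \<in> E" "z \<noteq> y1"
      using a unfolding a_eq TT_def Ed_def NV_def NW_def by auto
    have B: "x2 \<in> V" "y2 \<in> W" "{x2,y2} \<in> E" "{x,y2} \<in> E" "x \<noteq> x2" "{x2,z} \<in> E" "z \<noteq> y2"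
      using b unfolding b_eq xx TT_def Ed_def NV_def NW_def by auto
    have "x1 = x2 \<and> y1 = y2"
    proof (cases "y1 = y2")
      case True
      show ?thesis
      proof (rule ccontr)
        assume "\<not> (x1 = x2 \<and> y1 = y2)"
        then have "x1 \<noteq> x2" using True by simp
        then show False using noC4[of x1 x2 y1 z] A B True by auto
      qed
    next
      case False
      show ?thesis
      proof (cases "x1 = x2")
        case True
        then show ?thesis using noC4[of x x1 y1 y2] A B False by auto
      next
        case x12: False
        then show ?thesis using noC6[of x x1 x2 y1 z y2] A B False by auto
      qed
    qed
    then show "a = b" using a_eq b_eq xx by simp
  qed
  have img: "?g ` TT \<subseteq> (V \<times> W) - Ed"
  proof
    fix q assume "q \<in> ?g ` TT"
    then obtain x1 y1 x z where a: "((x1,y1),(x,z)) \<in> TT" and q: "q = (x,z)" by auto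
    have A: "x1 \<in> V" "y1 \<in> W" "{x1,y1} \<in> E" "x \<in> V" "{x,y1} \<in> E" "x \<noteq> x1" "z \<in> W" "{x1,z} \<in> E" "z \<noteq> y1"
      using a unfolding TT_def Ed_def NV_def NW_def by auto
    have "(x,z) \<notin> Ed"
    proof
      assume "(x,z) \<in> Ed"
      then have "{x,z} \<in> E" unfolding Ed_def by auto
      then show False using noC4[of x x1 y1 z] A by auto
    qed
    then show "q \<in> (V \<times> W) - Ed" using A q by auto
  qed
  have "card TT = card (?g ` TT)" using inj by (simp add: card_image)
  also have "\<dots> \<le> card ((V \<times> W) - Ed)" using img finV finW by (intro card_mono) auto
  also have "\<dots> = card V * card W - card Ed"
    using Ed_sub finEd by (simp add: card_Diff_subset card_cartesian_product)
  finally show ?thesis using card_Ed by simp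
qed

lemma TT_card: "card TT = (\<Sum>p\<in>Ed. (card (NW (snd p)) - 1) * (card (NV (fst p)) - 1))"
proof -
  have "card TT = (\<Sum>p\<in>Ed. card ((NW (snd p) - {fst p}) \<times> (NV (fst p) - {snd p})))"
    unfolding TT_def using finEd finNV finNW by (intro card_SigmaI) auto
  also have "\<dots> = (\<Sum>p\<in>Ed. (card (NW (snd p)) - 1) * (card (NV (fst p)) - 1))"
  proof (rule sum.cong[OF refl])
    fix p assume p: "p \<in> Ed"
    then have "fst p \<in> NW (snd p)" "snd p \<in> NV (fst p)" unfolding Ed_def NV_def NW_def by auto
    then show "card ((NW (snd p) - {fst p}) \<times> (NV (fst p) - {snd p})) = (card (NW (snd p)) - 1) * (card (NV (fst p)) - 1)"
      using finNV finNW by (simp add: card_cartesian_product)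
  qed
  finally show ?thesis .
qed

lemma core:
  assumes Vne: "V \<noteq> {}" and dV: "\<And>x. x \<in> V \<Longrightarrow> deg x \<ge> 2" and dW: "\<And>y. y \<in> W \<Longrightarrow> deg y \<ge> 2"
  shows "FF (int (card V)) (int (card W)) (int (card E)) \<ge> 0"
proof -
  define v where "v = real (card V)"
  define w where "w = real (card W)"
  define e where "e = real (card E)"
  have NV2: "\<And>x. x \<in> V \<Longrightarrow> card (NV x) \<ge> 2" using dV card_NV by simp
  have NW2: "\<And>y. y \<in> W \<Longrightarrow> card (NW y) \<ge> 2" using dW card_NW by simp
  have Wne: "W \<noteq> {}"
  proof -
    obtain x where "x \<in> V" using Vne by auto
    then have "card (NV x) \<ge> 2" by (rule NV2)
    then have "NV x \<noteq> {}" by auto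
    then show ?thesis unfolding NV_def by auto
  qed
  have vpos: "v > 0" unfolding v_def using Vne finV by (simp add: card_gt_0_iff)
  have wpos: "w > 0" unfolding w_def using Wne finW by (simp add: card_gt_0_iff)
  have sV: "(\<Sum>x\<in>V. real (card (NV x))) = e" unfolding e_def using sum_NV by (metis of_nat_sum)
  have sW: "(\<Sum>y\<in>W. real (card (NW y))) = e" unfolding e_def using sum_NW by (metis of_nat_sum)
  have jV: "(\<Sum>x\<in>V. real (card (NV x)) * ln (real (card (NV x)) - 1)) \<ge> e * ln (e / v - 1)"
    using jensen_phi[of V "\<lambda>x. real (card (NV x))"] finV Vne NV2 sV unfolding v_def by auto
  have jW: "(\<Sum>y\<in>W. real (card (NW y)) * ln (real (card (NW y)) - 1)) \<ge> e * ln (e / w - 1)"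
    using jensen_phi[of W "\<lambda>y. real (card (NW y))"] finW Wne NW2 sW unfolding w_def by auto
  have eV: "e \<ge> 2 * v"
  proof -
    have "(\<Sum>x\<in>V. real (card (NV x))) \<ge> (\<Sum>x\<in>V. 2)" by (rule sum_mono) (use NV2 in force)
    then show ?thesis using sV unfolding v_def by simp
  qed
  have eW: "e \<ge> 2 * w"
  proof -
    have "(\<Sum>y\<in>W. real (card (NW y))) \<ge> (\<Sum>y\<in>W. 2)" by (rule sum_mono) (use NW2 in force)
    then show ?thesis using sW unfolding w_def by simp
  qed
  define A where "A = e / v - 1"
  define B where "B = e / w - 1"
  have Apos: "A > 0" unfolding A_def using eV vpos by (simp add: field_simps)
  have Bpos: "B > 0" unfolding B_def using eW wpos by (simp add: field_simps)
  define \<alpha> :: "'a \<times> 'a \<Rightarrow> real" where "\<alpha> p = real (card (NV (fst p))) - 1" for p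
  define \<beta> :: "'a \<times> 'a \<Rightarrow> real" where "\<beta> p = real (card (NW (snd p))) - 1" for p
  have ap: "\<And>p. p \<in> Ed \<Longrightarrow> \<alpha> p > 0" unfolding \<alpha>_def Ed_def using NV2 by force
  have bp: "\<And>p. p \<in> Ed \<Longrightarrow> \<beta> p > 0" unfolding \<beta>_def Ed_def using NW2 by force
  have am: "(\<Sum>p\<in>Ed. \<alpha> p * \<beta> p) \<ge> A * B * (\<Sum>p\<in>Ed. 1 + ln (\<alpha> p) - ln A + ln (\<beta> p) - ln B)"
    by (rule amgm_edge[OF ap bp Apos Bpos])
  have cEd: "real (card Ed) = e" unfolding e_def using card_Ed by simp
  have sa: "(\<Sum>p\<in>Ed. ln (\<alpha> p)) = (\<Sum>x\<in>V. real (card (NV x)) * ln (real (card (NV x)) - 1))"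
    unfolding \<alpha>_def by (rule sum_Ed_fst)
  have sb: "(\<Sum>p\<in>Ed. ln (\<beta> p)) = (\<Sum>y\<in>W. real (card (NW y)) * ln (real (card (NW y)) - 1))"
    unfolding \<beta>_def by (rule sum_Ed_snd)
  have "(\<Sum>p\<in>Ed. 1 + ln (\<alpha> p) - ln A + ln (\<beta> p) - ln B)
        = e + (\<Sum>p\<in>Ed. ln (\<alpha> p)) - e * ln A + (\<Sum>p\<in>Ed. ln (\<beta> p)) - e * ln B"
    using cEd by (simp add: sum.distrib sum_subtractf)
  also have "\<dots> \<ge> e" using sa sb jV jW unfolding A_def B_def by linarith
  finally have "(\<Sum>p\<in>Ed. 1 + ln (\<alpha> p) - ln A + ln (\<beta> p) - ln B) \<ge> e" .
  then have "A * B * (\<Sum>p\<in>Ed. 1 + ln (\<alpha> p) - ln A + ln (\<beta> p) - ln B) \<ge> A * B * e"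
    using Apos Bpos by (intro mult_left_mono) auto
  with am have P1: "(\<Sum>p\<in>Ed. \<alpha> p * \<beta> p) \<ge> A * B * e" by linarith
  have "real (card TT) = (\<Sum>p\<in>Ed. real ((card (NW (snd p)) - 1) * (card (NV (fst p)) - 1)))"
    unfolding TT_card by (simp only: of_nat_sum)
  also have "\<dots> = (\<Sum>p\<in>Ed. \<alpha> p * \<beta> p)"
  proof (rule sum.cong[OF refl])
    fix p assume p: "p \<in> Ed"
    then have "card (NV (fst p)) \<ge> 1" "card (NW (snd p)) \<ge> 1" using NV2 NW2 unfolding Ed_def by force+
    then show "real ((card (NW (snd p)) - 1) * (card (NV (fst p)) - 1)) = \<alpha> p * \<beta> p"
      unfolding \<alpha>_def \<beta>_def by (simp add: of_nat_diff)
  qed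
  finally have P2: "real (card TT) = (\<Sum>p\<in>Ed. \<alpha> p * \<beta> p)" .
  have "real (card TT) \<le> real (card V * card W - card E)" using TT_bound by linarith
  also have "\<dots> = v * w - e" unfolding v_def w_def e_def using card_E_le by (simp add: of_nat_diff)
  finally have "A * B * e \<le> v * w - e" using P1 P2 by linarith
  then have "v * w * (A * B * e) \<le> v * w * (v * w - e)" using vpos wpos by (intro mult_left_mono) auto
  moreover have "v * w * (A * B * e) = e * (e - v) * (e - w)"
    unfolding A_def B_def using vpos wpos by (simp add: field_simps)
  ultimately have R: "v * w * (v * w - e) - e * (e - v) * (e - w) \<ge> 0" by linarith
  have "real_of_int (FF (int (card V)) (int (card W)) (int (card E))) = v * w * (v * w - e) - e * (e - v) * (e - w)"
    unfolding FF_alt v_def w_def e_def by simp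
  with R show ?thesis by linarith
qed

end

lemma cycle_mono: "E' \<subseteq> E \<Longrightarrow> has_cycle_of_length E' k \<Longrightarrow> has_cycle_of_length E k"
  unfolding has_cycle_of_length_def by blast

lemma bip_sym: "bip V W E \<Longrightarrow> bip W V E"
  unfolding bip_def bipartite_graph_def by (auto simp: insert_commute) (metis insert_commute)

lemma bip_del:
  assumes BB: "bip V W E"
  shows "bip (V - {x}) W {e\<in>E. x \<notin> e}"
proof -
  interpret bip V W E by (rule BB)
  show ?thesis
    unfolding bip_def bipartite_graph_def
  proof (intro conjI)
    show "finite (V - {x})" "finite W" "(V - {x}) \<inter> W = {}" using finV finW disj by auto
    show "\<forall>e\<in>{e \<in> E. x \<notin> e}. \<exists>a\<in>V - {x}. \<exists>b\<in>W. e = {a, b}" using edge by fastforce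
    show "\<not> has_cycle_of_length {e \<in> E. x \<notin> e} 4" using n4 cycle_mono[of "{e \<in> E. x \<notin> e}" E 4] by blast
    show "\<not> has_cycle_of_length {e \<in> E. x \<notin> e} 6" using n6 cycle_mono[of "{e \<in> E. x \<notin> e}" E 6] by blast
  qed
qed

lemma del_step:
  assumes B: "bip V W E" and x: "x \<in> V" and d: "card {e\<in>E. x \<in> e} \<le> 1"
    and IH: "FF (int (card (V - {x}))) (int (card W)) (int (card {e\<in>E. x \<notin> e})) \<ge> 0"
  shows "FF (int (card V)) (int (card W)) (int (card E)) \<ge> 0"
proof -
  interpret bip V W E by (rule B)
  interpret B': bip "V - {x}" W "{e\<in>E. x \<notin> e}" by (rule bip_del[OF B])
  have cV0: "card (V - {x}) = card V - 1" using x finV by (simp add: card_Diff_singleton)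
  have "0 < card V" using x finV by (auto simp: card_gt_0_iff)
  then have cV1: "card V \<ge> 1" by simp
  have cV: "int (card (V - {x})) = int (card V) - 1" using cV0 cV1 by simp
  have split: "E = {e\<in>E. x \<notin> e} \<union> {e\<in>E. x \<in> e}" by auto
  have cE: "card E = card {e\<in>E. x \<notin> e} + card {e\<in>E. x \<in> e}"
    by (subst split) (rule card_Un_disjoint, use finE in auto)
  have v1: "int (card V) \<ge> 1" using cV1 by simp
  show ?thesis
  proof (cases "card {e\<in>E. x \<in> e} = 0")
    case True
    then have "card E = card {e\<in>E. x \<notin> e}" using cE by simp
    then show ?thesis using FF_iso[of "int (card V)" "int (card W)" "int (card E)"] IH cV v1 by simp
  next
    case False
    then have d1: "card {e\<in>E. x \<in> e} = 1" using d by simp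
    then obtain e0 where "{e\<in>E. x \<in> e} = {e0}" using card_1_singletonE by blast
    then have "e0 \<in> E" by blast
    then obtain a b where b: "b \<in> W" using edge by blast
    have "0 < card W" using b finW by (auto simp: card_gt_0_iff)
    then have "card W \<ge> 1" by simp
    then have w1: "int (card W) \<ge> 1" by simp
    have cE1: "int (card {e\<in>E. x \<notin> e}) = int (card E) - 1" using cE d1 by simp
    have le: "card {e\<in>E. x \<notin> e} \<le> card (V - {x}) * card W" by (rule B'.card_E_le)
    then have "int (card {e\<in>E. x \<notin> e}) \<le> int (card (V - {x})) * int (card W)"
      by (simp only: of_nat_le_iff of_nat_mult[symmetric])
    then have "int (card E) - 1 \<le> (int (card V) - 1) * int (card W)" using cE1 cV by simp
    then show ?thesis using FF_leaf[of "int (card V)" "int (card W)" "int (card E)"] IH cV cE1 v1 w1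
      by simp
  qed
qed

lemma FF_main:
  assumes "bip V W E"
  shows "FF (int (card V)) (int (card W)) (int (card E)) \<ge> 0"
  using assms
proof (induction "card V + card W" arbitrary: V W E rule: less_induct)
  case less
  interpret bip V W E by (rule less.prems)
  show ?case
  proof (cases "E = {}")
    case True
    then show ?thesis unfolding FF_def by simp
  next
    case Ene: False
    show ?thesis
    proof (cases "\<exists>x\<in>V. card {e\<in>E. x \<in> e} \<le> 1")
      case True
      then obtain x where x: "x \<in> V" "card {e\<in>E. x \<in> e} \<le> 1" by blast
      have "card (V - {x}) < card V" by (rule card_Diff1_less[OF finV x(1)])
      then have "card (V - {x}) + card W < card V + card W" by simp
      then have "FF (int (card (V - {x}))) (int (card W)) (int (card {e\<in>E. x \<notin> e})) \<ge> 0"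
        using less.hyps bip_del[OF less.prems] by blast
      then show ?thesis using del_step[OF less.prems x] by simp
    next
      case noV: False
      show ?thesis
      proof (cases "\<exists>y\<in>W. card {e\<in>E. y \<in> e} \<le> 1")
        case True
        then obtain y where y: "y \<in> W" "card {e\<in>E. y \<in> e} \<le> 1" by blast
        have S: "bip W V E" using bip_sym[OF less.prems] .
        have "card (W - {y}) < card W" by (rule card_Diff1_less[OF finW y(1)])
        then have "card (W - {y}) + card V < card V + card W" by simp
        then have "FF (int (card (W - {y}))) (int (card V)) (int (card {e\<in>E. y \<notin> e})) \<ge> 0"
          using less.hyps bip_del[OF S] by blast
        then have "FF (int (card W)) (int (card V)) (int (card E)) \<ge> 0" using del_step[OF S y] by simp
        then show ?thesis using FF_sym by metis
      next
        case noW: False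
        have Vne: "V \<noteq> {}"
        proof
          assume "V = {}"
          then show False using Ene edge by blast
        qed
        show ?thesis
          by (rule core[OF Vne]) (use noV noW in \<open>auto simp: deg_def\<close>)
      qed
    qed
  qed
qed

lemma mantel_pairs:
  fixes S :: "('a \<times> 'a) set"
  assumes finW: "finite W" and sub: "S \<subseteq> W \<times> W"
    and sym: "\<And>p q. (p,q) \<in> S \<Longrightarrow> (q,p) \<in> S"
    and tri: "\<And>p q s. (p,q) \<in> S \<Longrightarrow> (p,s) \<in> S \<Longrightarrow> (q,s) \<in> S \<Longrightarrow> False"
  shows "2 * card S \<le> card W ^ 2"
proof -
  define N where "N p = {s. (p,s) \<in> S}" for p
  define d where "d p = real (card (N p))" for p
  have NW: "\<And>p. N p \<subseteq> W" unfolding N_def using sub by auto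
  have finN: "\<And>p. finite (N p)" using NW finW finite_subset by blast
  have SS: "S = Sigma W N" unfolding N_def using sub by auto
  have finS: "finite S" using SS finW finN by simp
  have cS: "real (card S) = (\<Sum>p\<in>W. d p)"
    unfolding SS d_def using finW finN by (simp add: card_SigmaI)
  have pair: "d p + d q \<le> real (card W)" if "(p,q) \<in> S" for p q
  proof -
    have "N p \<inter> N q = {}" unfolding N_def using tri that by blast
    then have "card (N p \<union> N q) = card (N p) + card (N q)" using finN by (simp add: card_Un_disjoint)
    moreover have "card (N p \<union> N q) \<le> card W" using NW finW by (intro card_mono) auto
    ultimately show ?thesis unfolding d_def by linarith
  qed
  have s1: "(\<Sum>pq\<in>S. d (fst pq) + d (snd pq)) \<le> (\<Sum>pq\<in>S. real (card W))"
    by (rule sum_mono) (use pair in auto)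
  have s2: "(\<Sum>pq\<in>S. d (fst pq)) = (\<Sum>p\<in>W. d p * d p)"
  proof -
    have "(\<Sum>pq\<in>S. d (fst pq)) = (\<Sum>p\<in>W. \<Sum>q\<in>N p. d p)"
      unfolding SS using finW finN by (subst sum.Sigma) (auto simp: case_prod_beta)
    then show ?thesis unfolding d_def by simp
  qed
  have bij: "bij_betw (\<lambda>(p,q). (q,p)) S S"
    unfolding bij_betw_def inj_on_def using sym by (auto simp: image_iff) 
  have s3: "(\<Sum>pq\<in>S. d (snd pq)) = (\<Sum>pq\<in>S. d (fst pq))"
  proof -
    have "(\<Sum>pq\<in>S. d (fst pq)) = (\<Sum>pq\<in>S. d (fst ((\<lambda>(p,q). (q,p)) pq)))"
      by (rule sum.reindex_bij_betw[OF bij, symmetric])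
    then show ?thesis by (simp add: case_prod_beta)
  qed
  have key: "2 * (\<Sum>p\<in>W. d p * d p) \<le> real (card S) * real (card W)"
    using s1 s2 s3 by (simp add: sum.distrib)
  have cs: "(\<Sum>p\<in>W. d p)^2 \<le> (\<Sum>p\<in>W. (d p)^2) * card W"
    by (rule sum_squared_le_sum_of_squares)
  then have "real (card S) ^ 2 \<le> (\<Sum>p\<in>W. d p * d p) * card W" using cS by (simp add: power2_eq_square)
  also have "\<dots> \<le> real (card S) * real (card W) / 2 * card W" using key by (intro mult_right_mono) auto
  finally have R: "2 * real (card S) ^ 2 \<le> real (card S) * real (card W) ^ 2"
    by (simp add: power2_eq_square algebra_simps)
  show ?thesis
  proof (cases "card S = 0")
    case True then show ?thesis by simp
  next
    case False
    then have "real (card S) > 0" by simp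
    with R have "2 * real (card S) \<le> real (card W) ^ 2"
      by (simp add: power2_eq_square algebra_simps)
    then have "real (2 * card S) \<le> real (card W ^ 2)" by simp
    then show ?thesis by linarith
  qed
qed

context bip
begin

definition rr where "rr x = (SOME y. y \<in> NV x)"
definition Sx where "Sx x = (\<lambda>y. (rr x, y)) ` (NV x - {rr x}) \<union> (\<lambda>y. (y, rr x)) ` (NV x - {rr x})"
definition SS where "SS = (\<Union>x\<in>V. Sx x)"

lemma rr_in: "NV x \<noteq> {} \<Longrightarrow> rr x \<in> NV x"
  unfolding rr_def by (rule someI_ex) auto

lemma Sx_mem:
  assumes "(p,q) \<in> Sx x"
  shows "p \<in> NV x \<and> q \<in> NV x \<and> p \<noteq> q \<and> (p = rr x \<or> q = rr x)"
proof -
  have "NV x - {rr x} \<noteq> {}" using assms unfolding Sx_def by auto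
  then have "rr x \<in> NV x" using rr_in by blast
  then show ?thesis using assms unfolding Sx_def by auto
qed

lemma card_Sx: "card (Sx x) = 2 * (card (NV x) - 1)"
proof (cases "NV x = {}")
  case True then show ?thesis unfolding Sx_def by simp
next
  case False
  then have r: "rr x \<in> NV x" by (rule rr_in)
  have c: "card (NV x - {rr x}) = card (NV x) - 1" using r finNV by simp
  have d: "(\<lambda>y. (rr x, y)) ` (NV x - {rr x}) \<inter> (\<lambda>y. (y, rr x)) ` (NV x - {rr x}) = {}" by auto
  have "card (Sx x) = card ((\<lambda>y. (rr x, y)) ` (NV x - {rr x})) + card ((\<lambda>y. (y, rr x)) ` (NV x - {rr x}))"
    unfolding Sx_def using d finNV by (intro card_Un_disjoint) auto
  also have "\<dots> = card (NV x - {rr x}) + card (NV x - {rr x})"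
    by (simp add: card_image inj_on_def)
  finally show ?thesis using c by simp
qed

lemma Sx_disj:
  assumes "x \<in> V" "x' \<in> V" "x \<noteq> x'"
  shows "Sx x \<inter> Sx x' = {}"
proof (rule ccontr)
  assume "Sx x \<inter> Sx x' \<noteq> {}"
  then obtain p q where "(p,q) \<in> Sx x" "(p,q) \<in> Sx x'" by auto
  then have h: "p \<in> NV x" "q \<in> NV x" "p \<noteq> q" "p \<in> NV x'" "q \<in> NV x'" using Sx_mem by blast+
  then show False using noC4[of x x' p q] assms unfolding NV_def by auto
qed

lemma card_SS: "card SS = (\<Sum>x\<in>V. 2 * (card (NV x) - 1))"
proof -
  have fin: "\<And>x. finite (Sx x)" unfolding Sx_def using finNV by simp
  have "card SS = (\<Sum>x\<in>V. card (Sx x))"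
    unfolding SS_def using finV fin Sx_disj by (intro card_UN_disjoint) auto
  then show ?thesis using card_Sx by simp
qed

lemma SS_props:
  "SS \<subseteq> W \<times> W"
  "\<And>p q. (p,q) \<in> SS \<Longrightarrow> (q,p) \<in> SS"
  "\<And>p q s. (p,q) \<in> SS \<Longrightarrow> (p,s) \<in> SS \<Longrightarrow> (q,s) \<in> SS \<Longrightarrow> False"
proof -
  show "SS \<subseteq> W \<times> W" unfolding SS_def using Sx_mem unfolding NV_def by fastforce
  show "\<And>p q. (p,q) \<in> SS \<Longrightarrow> (q,p) \<in> SS" unfolding SS_def Sx_def by blast
  fix p q s assume a: "(p,q) \<in> SS" "(p,s) \<in> SS" "(q,s) \<in> SS"
  then obtain x1 x3 x2 where x: "x1 \<in> V" "(p,q) \<in> Sx x1" "x3 \<in> V" "(p,s) \<in> Sx x3" "x2 \<in> V" "(q,s) \<in> Sx x2"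
    unfolding SS_def by blast
  have m1: "p \<in> NV x1" "q \<in> NV x1" "p \<noteq> q" "p = rr x1 \<or> q = rr x1" using Sx_mem[OF x(2)] by auto
  have m3: "p \<in> NV x3" "s \<in> NV x3" "p \<noteq> s" "p = rr x3 \<or> s = rr x3" using Sx_mem[OF x(4)] by auto
  have m2: "q \<in> NV x2" "s \<in> NV x2" "q \<noteq> s" "q = rr x2 \<or> s = rr x2" using Sx_mem[OF x(6)] by auto
  have W: "p \<in> W" "q \<in> W" "s \<in> W" using m1 m3 unfolding NV_def by auto
  have E: "{x1,p} \<in> E" "{x1,q} \<in> E" "{x3,p} \<in> E" "{x3,s} \<in> E" "{x2,q} \<in> E" "{x2,s} \<in> E"
    using m1 m2 m3 unfolding NV_def by auto
  show False
  proof (cases "x1 = x2")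
    case T12: True
    show False
    proof (cases "x1 = x3")
      case True
      then show False using m1 m2 m3 T12 by auto
    next
      case False
      then show False using noC4[of x1 x3 p s] x W E T12 m3 by auto
    qed
  next
    case F12: False
    show False
    proof (cases "x1 = x3")
      case True
      then show False using noC4[of x1 x2 q s] x W E F12 m2 by auto
    next
      case F13: False
      show False
      proof (cases "x2 = x3")
        case True
        then show False using noC4[of x1 x2 p q] x W E F12 m1 by auto
      next
        case False
        then show False using noC6[of x1 x2 x3 q s p] x W E F12 F13 m1 m2 m3 by auto
      qed
    qed
  qed
qed

lemma part2: "card E \<le> card V + card W ^ 2 div 4"
proof -
  have M: "2 * card SS \<le> card W ^ 2" using mantel_pairs[OF finW SS_props] .
  have "card E = (\<Sum>x\<in>V. card (NV x))" using sum_NV by simp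
  also have "\<dots> \<le> (\<Sum>x\<in>V. 1 + (card (NV x) - 1))" by (rule sum_mono) auto
  also have "\<dots> = card V + (\<Sum>x\<in>V. card (NV x) - 1)" by (subst sum.distrib) simp
  finally have e: "card E \<le> card V + (\<Sum>x\<in>V. card (NV x) - 1)" .
  have "card SS = 2 * (\<Sum>x\<in>V. card (NV x) - 1)" using card_SS by (simp add: sum_distrib_left)
  with M have "(\<Sum>x\<in>V. card (NV x) - 1) * 4 \<le> card W ^ 2" by simp
  then have "(\<Sum>x\<in>V. card (NV x) - 1) \<le> card W ^ 2 div 4" by (simp add: less_eq_div_iff_mult_less_eq)
  with e show ?thesis by simp
qed

end


theorem theorem1p1:
  fixes V W :: "'a set" and E :: "'a set set"
  assumes "bipartite_graph V W E"
    and "\<not> has_cycle_of_length E 4"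
    and "\<not> has_cycle_of_length E 6"
  shows "(int (card E))^3 - (int (card V) + int (card W)) * (int (card E))^2
           + 2 * int (card V) * int (card W) * int (card E)
           - (int (card V))^2 * (int (card W))^2 \<le> 0
         \<and> (card V \<ge> (card W)^2 div 4 \<longrightarrow> card E \<le> card V + (card W)^2 div 4)"
proof -
  have B: "bip V W E" unfolding bip_def using assms by auto
  have F: "FF (int (card V)) (int (card W)) (int (card E)) \<ge> 0" by (rule FF_main[OF B])
  have "(int (card E))^3 - (int (card V) + int (card W)) * (int (card E))^2
           + 2 * int (card V) * int (card W) * int (card E)
           - (int (card V))^2 * (int (card W))^2 = - FF (int (card V)) (int (card W)) (int (card E))"
    unfolding FF_def by (simp add: algebra_simps)
  with F have P1: "(int (card E))^3 - (int (card V) + int (card W)) * (int (card E))^2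
           + 2 * int (card V) * int (card W) * int (card E)
           - (int (card V))^2 * (int (card W))^2 \<le> 0" by simp
  have P2: "card E \<le> card V + (card W)^2 div 4" by (rule bip.part2[OF B])
  show ?thesis using P1 P2 by simp
qed

end
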